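(* Let $\mathcal G$ be a connected rank-3 tensor Feynman graph as in the context, with $N_{\rm ext}\ge 6$ external legs. Let \[ \omega_{\deg}(\mathcal G)=-(V-1)+\tfrac12F_{\rm int}(\mathcal G). \] Then \[ \omega_{\deg}(\mathcal G)\le-\tfrac1{12}N_{\rm ext}. \]
   Context: Bubbles. Use colors $1,2,3$ for bubble edges and color $0$ for propagator lines. The tetrahedral bubble $\mathbf b_+$ is $K_4$ on $w_1,\dots,w_4$ with the following colored edges: \begin{itemize} \item $w_1w_2$ and $w_3w_4$ of color 1; \item $w_1w_3$ and $w_2w_4$ of color 2; \item $w_1w_4$ and $w_2w_3$ of color 3. \end{itemize} For $c\in\{1,2,3\}$, the melonic bubble $\mathbf b_c$ has vertices $w_1,\dots,w_4$ and the following edges: \begin{itemize} \item $w_1w_2$ doubled, carrying the two colors of $\{1,2,3\}\setminus\{c\}$; \item $w_3w_4$ doubled, carrying the two colors of $\{1,2,3\}\setminus\{c\}$; \item single edges $w_2w_3$ and $w_4w_1$ of color $c$. \end{itemize} Graphs. A graph $\mathcal G$ consists of the following data: \begin{itemize} \item $V=V_++V_m$ interaction vertices (copies of $\mathbf b_+$, resp. of some $\mathbf b_c$); \item $L$ internal color-0 lines joining bubble vertices, each bubble vertex incident to at most one line; \item a color-0 external leg at each bubble vertex not incident to a line. \end{itemize} Let $N_{\rm ext}$ be the number of external legs. The colored extension $\mathcal G_{\rm col}$ is the resulting 4-edge-colored graph. Connected means $\mathcal G_{\rm col}$ is connected. Faces. A face of color $c\in\{1,2,3\}$ is a connected component of the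 subgraph of $\mathcal G_{\rm col}$ formed by the color-0 edges and half-edges and the color-$c$ edges. It is internal if it is a cycle, and external if it is a path between two external legs. $F_{\rm int}(\mathcal G)$ is the number of internal faces. *)

theory Defs
  imports Complex_Main
begin

datatype bubble = Tetra | Melo nat

definition valid_bubble :: "bubble \<Rightarrow> bool" where
  "valid_bubble b = (case b of Tetra \<Rightarrow> True | Melo c \<Rightarrow> c \<in> {1,2,3})"

text \<open>Colored edges of a bubble, as triples (endpoint, endpoint, color); vertices w1..w4 are 1..4.\<close>
definition bubble_edges :: "bubble \<Rightarrow> (nat \<times> nat \<times> nat) set" where
  "bubble_edges b = (case b of
      Tetra \<Rightarrow> {(1,2,1),(3,4,1),(1,3,2),(2,4,2),(1,4,3),(2,3,3)}
    | Melo c \<Rightarrow> {(1,2,d) | d. d \<in> {1,2,3} - {c}} \<union> {(3,4,d) | d. d \<in> {1,2,3} - {c}}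
               \<union> {(2,3,c),(4,1,c)})"

text \<open>A graph: V bubbles indexed 0..<V with types bt; bubble vertices are pairs (i,k),
  i<V, k\<in>{1..4}; lns is the partial involution describing the color-0 lines.\<close>
definition verts :: "nat \<Rightarrow> (nat \<times> nat) set" where
  "verts V = {(i,k). i < V \<and> k \<in> {1..4}}"

definition wf_graph :: "nat \<Rightarrow> (nat \<Rightarrow> bubble) \<Rightarrow> (nat \<times> nat \<Rightarrow> (nat \<times> nat) option) \<Rightarrow> bool" where
  "wf_graph V bt lns \<longleftrightarrow>
     (\<forall>i<V. valid_bubble (bt i)) \<and>
     (\<forall>v w. lns v = Some w \<longrightarrow> v \<in> verts V \<and> w \<in> verts V \<and> w \<noteq> v \<and> lns w = Some v)"

definition ext_legs :: "nat \<Rightarrow> (nat \<times> nat \<Rightarrow> (nat \<times> nat) option) \<Rightarrow> (nat \<times> nat) set" where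
  "ext_legs V lns = {v \<in> verts V. lns v = None}"

definition N_ext :: "nat \<Rightarrow> (nat \<times> nat \<Rightarrow> (nat \<times> nat) option) \<Rightarrow> nat" where
  "N_ext V lns = card (ext_legs V lns)"

definition face_adj :: "nat \<Rightarrow> (nat \<Rightarrow> bubble) \<Rightarrow> (nat \<times> nat \<Rightarrow> (nat \<times> nat) option) \<Rightarrow> nat
    \<Rightarrow> nat \<times> nat \<Rightarrow> nat \<times> nat \<Rightarrow> bool" where
  "face_adj V bt lns c u v \<longleftrightarrow> u \<in> verts V \<and> v \<in> verts V \<and>
     ((fst u = fst v \<and> ((snd u, snd v, c) \<in> bubble_edges (bt (fst u))
                        \<or> (snd v, snd u, c) \<in> bubble_edges (bt (fst u))))
      \<or> lns u = Some v)"

definition faces :: "nat \<Rightarrow> (nat \<Rightarrow> bubble) \<Rightarrow> (nat \<times> nat \<Rightarrow> (nat \<times> nat) option) \<Rightarrow> nat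
    \<Rightarrow> (nat \<times> nat) set set" where
  "faces V bt lns c = verts V // {(u,v). u \<in> verts V \<and> v \<in> verts V \<and> (face_adj V bt lns c)\<^sup>*\<^sup>* u v}"

text \<open>A face is internal (a cycle) iff it contains no external leg; otherwise it is a path
  between two external legs.\<close>
definition F_int :: "nat \<Rightarrow> (nat \<Rightarrow> bubble) \<Rightarrow> (nat \<times> nat \<Rightarrow> (nat \<times> nat) option) \<Rightarrow> nat" where
  "F_int V bt lns = (\<Sum>c\<in>{1,2,3::nat}. card {F \<in> faces V bt lns c. F \<inter> ext_legs V lns = {}})"

definition connected_graph :: "nat \<Rightarrow> (nat \<Rightarrow> bubble) \<Rightarrow> (nat \<times> nat \<Rightarrow> (nat \<times> nat) option) \<Rightarrow> bool" where
  "connected_graph V bt lns \<longleftrightarrow>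
     (\<forall>u\<in>verts V. \<forall>v\<in>verts V. (\<lambda>x y. \<exists>c\<in>{1,2,3}. face_adj V bt lns c x y)\<^sup>*\<^sup>* u v)"

definition omega_deg :: "nat \<Rightarrow> (nat \<Rightarrow> bubble) \<Rightarrow> (nat \<times> nat \<Rightarrow> (nat \<times> nat) option) \<Rightarrow> real" where
  "omega_deg V bt lns = - (real V - 1) + real (F_int V bt lns) / 2"

end

theory Submission
  imports Defs
begin

lemma even_inv:
  assumes "finite S" "\<forall>x\<in>S. f x \<in> S \<and> f x \<noteq> x \<and> f (f x) = x"
  shows "even (card S)"
  using assms
proof (induction "card S" arbitrary: S rule: less_induct)
  case less
  show ?case
  proof (cases "S = {}")
    case True then show ?thesis by simp
  next
    case False
    then obtain x where x: "x \<in> S" by blast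
    let ?S = "S - {x, f x}"
    have fx: "f x \<in> S" "f x \<noteq> x" using less.prems x by auto
    have sub: "{x, f x} \<subseteq> S" using x fx by auto
    have c2: "card {x, f x} = 2" using fx by simp
    have c: "card S = card ?S + 2"
    proof -
      have "card ?S = card S - card {x, f x}" using less.prems(1) sub by (simp add: card_Diff_subset)
      moreover have "card {x, f x} \<le> card S" using sub less.prems(1) card_mono by blast
      ultimately show ?thesis using c2 by linarith
    qed
    have "even (card ?S)"
    proof (rule less.hyps)
      show "card ?S < card S" using c by simp
      show "finite ?S" using less.prems by simp
      show "\<forall>y\<in>?S. f y \<in> ?S \<and> f y \<noteq> y \<and> f (f y) = y"
      proof
        fix y assume y: "y \<in> ?S"
        have a: "f y \<in> S" "f y \<noteq> y" "f (f y) = y" using less.prems(2) y by auto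
        have "f y \<noteq> x" using a y by (metis DiffD2 insertI2 singletonI)
        moreover have "f y \<noteq> f x" using a y less.prems(2) x by (metis DiffD2 insertI1)
        ultimately show "f y \<in> ?S \<and> f y \<noteq> y \<and> f (f y) = y" using a by auto
      qed
    qed
    then show ?thesis using c by simp
  qed
qed

lemma rtranclp_transition:
  assumes "r\<^sup>*\<^sup>* x y" "Q x" "\<not> Q y"
  shows "\<exists>a b. r\<^sup>*\<^sup>* x a \<and> r a b \<and> Q a \<and> \<not> Q b"
  using assms
proof (induction rule: rtranclp_induct)
  case base then show ?case by simp
next
  case (step y z)
  show ?case
  proof (cases "Q y")
    case True then show ?thesis using step by blast
  next
    case False then show ?thesis using step by blast
  qed
qed

lemma rtranclp_sym:
  assumes "\<And>a b. r a b \<Longrightarrow> r b a" "r\<^sup>*\<^sup>* x y"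
  shows "r\<^sup>*\<^sup>* y x"
  using assms(2)
proof (induction rule: rtranclp_induct)
  case base then show ?case by simp
next
  case (step y z)
  then show ?case using assms(1) by (meson converse_rtranclp_into_rtranclp)
qed

definition sw12 :: "nat \<Rightarrow> nat" where
  "sw12 k = (if k = 1 then 2 else if k = 2 then 1 else if k = 3 then 4 else 3)"
definition sw13 :: "nat \<Rightarrow> nat" where
  "sw13 k = (if k = 1 then 3 else if k = 3 then 1 else if k = 2 then 4 else 2)"
definition sw14 :: "nat \<Rightarrow> nat" where
  "sw14 k = (if k = 1 then 4 else if k = 4 then 1 else if k = 2 then 3 else 2)"

definition pc :: "bubble \<Rightarrow> nat \<Rightarrow> nat \<Rightarrow> nat" where
  "pc b c k = (case b of Tetra \<Rightarrow> (if c = 1 then sw12 k else if c = 2 then sw13 k else sw14 k)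
              | Melo d \<Rightarrow> (if c = d then sw14 k else sw12 k))"

lemma k4: "(k::nat) \<in> {1..4} \<Longrightarrow> k = 1 \<or> k = 2 \<or> k = 3 \<or> k = 4" by auto

lemma edge_iff:
  assumes "valid_bubble b" "c \<in> {1,2,3}" "k \<in> {1..4}" "k' \<in> {1..4}"
  shows "((k,k',c) \<in> bubble_edges b \<or> (k',k,c) \<in> bubble_edges b) \<longleftrightarrow> k' = pc b c k"
proof (cases b)
  case Tetra
  then show ?thesis using k4[OF assms(3)] k4[OF assms(4)] assms(2)
    by (auto simp: bubble_edges_def pc_def sw12_def sw13_def sw14_def)
next
  case (Melo d)
  then have d: "d \<in> {1,2,3}" using assms(1) by (simp add: valid_bubble_def)
  show ?thesis using Melo k4[OF assms(3)] k4[OF assms(4)] assms(2) d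
    by (auto simp: bubble_edges_def pc_def sw12_def sw13_def sw14_def)
qed

lemma pc_props:
  assumes "valid_bubble b" "c \<in> {1,2,3}" "k \<in> {1..4}"
  shows "pc b c k \<in> {1..4} \<and> pc b c k \<noteq> k \<and> pc b c (pc b c k) = k"
proof (cases b)
  case Tetra
  then show ?thesis using k4[OF assms(3)] assms(2)
    by (auto simp: pc_def sw12_def sw13_def sw14_def)
next
  case (Melo d)
  show ?thesis using Melo k4[OF assms(3)] assms(2)
    by (auto simp: pc_def sw12_def sw13_def sw14_def)
qed


locale GG =
  fixes V :: nat and bt :: "nat \<Rightarrow> bubble"
  assumes valid: "\<And>i. i < V \<Longrightarrow> valid_bubble (bt i)"
begin

abbreviation U where "U \<equiv> verts V"
abbreviation adj where "adj l c \<equiv> face_adj V bt l c"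

definition Pt :: "nat \<Rightarrow> nat \<times> nat \<Rightarrow> nat \<times> nat" where
  "Pt c u = (fst u, pc (bt (fst u)) c (snd u))"

definition wfl :: "(nat \<times> nat \<Rightarrow> (nat \<times> nat) option) \<Rightarrow> bool" where
  "wfl l \<longleftrightarrow> (\<forall>v w. l v = Some w \<longrightarrow> v \<in> U \<and> w \<in> U \<and> w \<noteq> v \<and> l w = Some v)"

definition Rall where "Rall l x y \<longleftrightarrow> (\<exists>c\<in>{1,2,3::nat}. adj l c x y)"

definition cls where "cls l c x = {y. (adj l c)\<^sup>*\<^sup>* x y}"

definition Fc where "Fc l A c = card {K \<in> cls l c ` A. K \<inter> ext_legs V l = {}}"

definition Ftot where "Ftot l A = Fc l A 1 + Fc l A 2 + Fc l A 3"

definition M where "M l A = card {x \<in> A. l x \<noteq> None}"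

definition closedA where "closedA l A \<longleftrightarrow> (\<forall>x y. x \<in> A \<longrightarrow> Rall l x y \<longrightarrow> y \<in> A)"

lemma finite_U: "finite U"
proof -
  have "U \<subseteq> {0..<V} \<times> {1..4}" by (auto simp: verts_def)
  then show ?thesis by (rule finite_subset) simp
qed

lemma Pt_props:
  assumes "u \<in> U" "c \<in> {1,2,3}"
  shows "Pt c u \<in> U \<and> Pt c u \<noteq> u \<and> Pt c (Pt c u) = u \<and> fst (Pt c u) = fst u"
proof -
  obtain i k where u: "u = (i,k)" "i < V" "k \<in> {1..4}" using assms(1) unfolding verts_def by blast
  have v: "valid_bubble (bt i)" using valid u by simp
  show ?thesis using pc_props[OF v assms(2) u(3)] u by (auto simp: Pt_def verts_def)
qed

lemma adj_iff:
  assumes "c \<in> {1,2,3}"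
  shows "adj l c u v \<longleftrightarrow> u \<in> U \<and> v \<in> U \<and> (v = Pt c u \<or> l u = Some v)"
proof -
  have "(fst u = fst v \<and> ((snd u, snd v, c) \<in> bubble_edges (bt (fst u))
                        \<or> (snd v, snd u, c) \<in> bubble_edges (bt (fst u)))) \<longleftrightarrow> v = Pt c u"
    if uU: "u \<in> U" and vU: "v \<in> U"
  proof -
    obtain i k where u: "u = (i,k)" "i < V" "k \<in> {1..4}" using uU unfolding verts_def by blast
    obtain j k' where w: "v = (j,k')" "j < V" "k' \<in> {1..4}" using vU unfolding verts_def by blast
    have vb: "valid_bubble (bt i)" using valid u by simp
    show ?thesis using edge_iff[OF vb assms u(3) w(3)] u w by (auto simp: Pt_def)
  qed
  then show ?thesis unfolding face_adj_def by blast
qed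

lemma adj_sym:
  assumes "wfl l" "c \<in> {1,2,3}" "adj l c u v"
  shows "adj l c v u"
  using assms Pt_props[of u c] unfolding adj_iff[OF assms(2)] wfl_def by metis

lemma Rall_sym: "wfl l \<Longrightarrow> Rall l u v \<Longrightarrow> Rall l v u"
  unfolding Rall_def using adj_sym by blast

lemma Rall_rsym: "wfl l \<Longrightarrow> (Rall l)\<^sup>*\<^sup>* u v \<Longrightarrow> (Rall l)\<^sup>*\<^sup>* v u"
  using rtranclp_sym[of "Rall l"] Rall_sym by blast

lemma adj_rsym: "wfl l \<Longrightarrow> c \<in> {1,2,3} \<Longrightarrow> (adj l c)\<^sup>*\<^sup>* u v \<Longrightarrow> (adj l c)\<^sup>*\<^sup>* v u"
  using rtranclp_sym[of "adj l c"] adj_sym by blast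

lemma adj_Rall: assumes "c \<in> {1,2,3}" "(adj l c)\<^sup>*\<^sup>* u v" shows "(Rall l)\<^sup>*\<^sup>* u v"
  using assms(2) by (induction rule: rtranclp_induct) (use assms(1) in \<open>auto simp: Rall_def intro: rtranclp.rtrancl_into_rtrancl\<close>)

lemma reach_in: assumes "closedA l A" "x \<in> A" "(Rall l)\<^sup>*\<^sup>* x y" shows "y \<in> A"
  using assms(3) by (induction rule: rtranclp_induct) (use assms(1,2) in \<open>auto simp: closedA_def\<close>)

lemma cls_sub: "closedA l A \<Longrightarrow> x \<in> A \<Longrightarrow> c \<in> {1,2,3} \<Longrightarrow> cls l c x \<subseteq> A"
  unfolding cls_def using reach_in adj_Rall by blast

lemma closedU: "closedA l U"
  by (auto simp: closedA_def Rall_def face_adj_def)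

lemma cls_eq: "wfl l \<Longrightarrow> c \<in> {1,2,3} \<Longrightarrow> y \<in> cls l c x \<Longrightarrow> cls l c y = cls l c x"
  unfolding cls_def using adj_rsym
  by (smt (verit, ccfv_SIG) Collect_cong mem_Collect_eq rtranclp_trans)

lemma cls_self: "x \<in> cls l c x" by (simp add: cls_def)

end

context GG
begin

lemma wfl_D: "wfl l \<Longrightarrow> l v = Some w \<Longrightarrow> v \<in> U \<and> w \<in> U \<and> w \<noteq> v \<and> l w = Some v"
  unfolding wfl_def by blast

lemma adj_mono:
  assumes "c \<in> {1,2,3}" "adj (l(b:=None, b':=None)) c u v" shows "adj l c u v"
proof -
  have "(l(b:=None, b':=None)) u = Some v \<Longrightarrow> l u = Some v"
    by (cases "u = b"; cases "u = b'") auto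
  then show ?thesis using assms unfolding adj_iff[OF assms(1)] by blast
qed

lemma adj_mono_r:
  assumes "c \<in> {1,2,3}" "(adj (l(b:=None, b':=None)) c)\<^sup>*\<^sup>* u v" shows "(adj l c)\<^sup>*\<^sup>* u v"
  using assms(2) by (induction rule: rtranclp_induct)
    (auto intro: rtranclp.rtrancl_into_rtrancl adj_mono[OF assms(1)])

lemma Rall_mono:
  assumes "Rall (l(b:=None, b':=None)) u v" shows "Rall l u v"
  using assms adj_mono unfolding Rall_def by blast

lemma Rall_mono_r:
  assumes "(Rall (l(b:=None, b':=None)))\<^sup>*\<^sup>* u v" shows "(Rall l)\<^sup>*\<^sup>* u v"
  using assms by (induction rule: rtranclp_induct)
    (auto intro: rtranclp.rtrancl_into_rtrancl Rall_mono)

lemma closed_mono: "closedA l A \<Longrightarrow> closedA (l(b:=None, b':=None)) A"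
  unfolding closedA_def using Rall_mono by blast

lemma wfl_remove:
  assumes "wfl l" "l b = Some b'"
  shows "wfl (l(b:=None, b':=None))"
  unfolding wfl_def
proof (intro allI impI)
  fix v w assume h: "(l(b:=None, b':=None)) v = Some w"
  have wf: "\<And>v w. l v = Some w \<Longrightarrow> v \<in> U \<and> w \<in> U \<and> w \<noteq> v \<and> l w = Some v"
    using assms(1) unfolding wfl_def by blast
  have vb: "v \<noteq> b" "v \<noteq> b'" using h by (auto split: if_splits)
  then have lv: "l v = Some w" using h by simp
  have w: "w \<in> U" "w \<noteq> v" "l w = Some v" "v \<in> U" using wf[OF lv] by auto
  have "l b' = Some b" using wf[OF assms(2)] by blast
  then have "w \<noteq> b" "w \<noteq> b'" using w assms(2) vb by auto
  then show "v \<in> U \<and> w \<in> U \<and> w \<noteq> v \<and> (l(b:=None, b':=None)) w = Some v" using w by simp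
qed

lemma remove_face:
  assumes wf: "wfl l" and lb: "l b = Some b'" and c: "c\<in>{1,2,3}" and AU: "A \<subseteq> U"
    and l': "l' = l(b:=None, b':=None)"
  shows "Fc l A c \<le> Fc l' A c + (if cls l c b \<inter> ext_legs V l = {} then 1 else 0)"
proof -
  let ?I = "{K \<in> cls l c ` A. K \<inter> ext_legs V l = {}}"
  let ?I' = "{K \<in> cls l' c ` A. K \<inter> ext_legs V l' = {}}"
  have finA: "finite A" using AU finite_U finite_subset by blast
  have fI: "finite ?I'" using finA by simp
  have bU: "b \<in> U" "b' \<in> U" "b \<noteq> b'" "l b' = Some b" using wfl_D[OF wf lb] by auto
  have bb': "b' \<in> cls l c b"
    unfolding cls_def using adj_iff[OF c] bU lb by blast
  have sub: "?I \<subseteq> ?I' \<union> (?I \<inter> {cls l c b})"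
  proof
    fix K assume K: "K \<in> ?I"
    show "K \<in> ?I' \<union> (?I \<inter> {cls l c b})"
    proof (cases "K = cls l c b")
      case True then show ?thesis using K by blast
    next
      case False
      obtain x where x: "x \<in> A" "K = cls l c x" using K by blast
      have nb: "b \<notin> K" using False cls_eq[OF wf c] x by metis
      have nb': "b' \<notin> K" using False cls_eq[OF wf c] x bb' by metis
      have eq: "cls l' c x = K"
      proof
        show "cls l' c x \<subseteq> K" using x adj_mono_r[OF c] unfolding cls_def l' by blast
        show "K \<subseteq> cls l' c x"
        proof
          fix z assume "z \<in> K"
          then have "(adj l c)\<^sup>*\<^sup>* x z" using x by (simp add: cls_def)
          then have "(adj l' c)\<^sup>*\<^sup>* x z"
          proof (induction rule: rtranclp_induct)
            case base then show ?case by simp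
          next
            case (step y z)
            have "y \<in> K" using step x by (simp add: cls_def)
            then have "y \<noteq> b" "y \<noteq> b'" using nb nb' by auto
            then have "adj l' c y z" using step(2) unfolding l' adj_iff[OF c] by auto
            then show ?case using step by (meson rtranclp.rtrancl_into_rtrancl)
          qed
          then show "z \<in> cls l' c x" by (simp add: cls_def)
        qed
      qed
      have "K \<inter> ext_legs V l' = {}"
      proof -
        have "K \<inter> ext_legs V l = {}" using K by blast
        then show ?thesis using nb nb' unfolding ext_legs_def l' by auto
      qed
      then show ?thesis using eq x by blast
    qed
  qed
  have "card ?I \<le> card (?I' \<union> (?I \<inter> {cls l c b}))"
    using sub fI by (intro card_mono) auto
  also have "\<dots> \<le> card ?I' + card (?I \<inter> {cls l c b})" by (rule card_Un_le)
  also have "card (?I \<inter> {cls l c b}) \<le> (if cls l c b \<inter> ext_legs V l = {} then 1 else 0)"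
  proof (cases "cls l c b \<inter> ext_legs V l = {}")
    case True
    have "card (?I \<inter> {cls l c b}) \<le> card {cls l c b}" by (intro card_mono) auto
    then show ?thesis using True by simp
  next
    case False
    then have "?I \<inter> {cls l c b} = {}" by blast
    then show ?thesis by simp
  qed
  finally show ?thesis unfolding Fc_def by simp
qed

lemma bridge:
  assumes wf: "wfl l" and lb: "l b = Some b'" and c: "c\<in>{1,2,3}"
    and l': "l' = l(b:=None, b':=None)"
    and nbr: "\<not> (Rall l')\<^sup>*\<^sup>* b b'"
  shows "cls l c b \<inter> ext_legs V l \<noteq> {}"
proof
  assume int: "cls l c b \<inter> ext_legs V l = {}"
  have bU: "b \<in> U" "b' \<in> U" "b \<noteq> b'" "l b' = Some b" using wfl_D[OF wf lb] by auto
  let ?S = "cls l' c b"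
  have SU: "?S \<subseteq> U" using cls_sub[OF closedU bU(1) c] .
  have finS: "finite ?S" using SU finite_U finite_subset by blast
  have Ssub: "?S \<subseteq> cls l c b" unfolding cls_def l' using adj_mono_r[OF c] by blast
  have b'S: "b' \<notin> ?S" using nbr adj_Rall[OF c] unfolding cls_def by blast
  have bS: "b \<in> ?S" by (rule cls_self)
  have ev1: "even (card ?S)"
  proof (rule even_inv[OF finS])
    show "\<forall>x\<in>?S. Pt c x \<in> ?S \<and> Pt c x \<noteq> x \<and> Pt c (Pt c x) = x"
    proof
      fix x assume x: "x \<in> ?S"
      then have xU: "x \<in> U" using SU by blast
      have a: "adj l' c x (Pt c x)" using adj_iff[OF c] Pt_props[OF xU c] xU by blast
      have "(adj l' c)\<^sup>*\<^sup>* b x" using x by (simp add: cls_def)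
      then have "(adj l' c)\<^sup>*\<^sup>* b (Pt c x)" using a by (rule rtranclp.rtrancl_into_rtrancl)
      then have "Pt c x \<in> ?S" by (simp add: cls_def)
      then show "Pt c x \<in> ?S \<and> Pt c x \<noteq> x \<and> Pt c (Pt c x) = x" using Pt_props[OF xU c] by blast
    qed
  qed
  have ev2: "even (card (?S - {b}))"
  proof (rule even_inv[where f = "\<lambda>x. the (l x)"])
    show "finite (?S - {b})" using finS by simp
    show "\<forall>x\<in>?S - {b}. the (l x) \<in> ?S - {b} \<and> the (l x) \<noteq> x \<and> the (l (the (l x))) = x"
    proof
      fix x assume x: "x \<in> ?S - {b}"
      then have xU: "x \<in> U" using SU by blast
      have xb': "x \<noteq> b'" using x b'S by blast
      have "x \<notin> ext_legs V l" using x Ssub int by blast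
      then obtain z where z: "l x = Some z" using xU unfolding ext_legs_def by auto
      have zz: "z \<in> U" "z \<noteq> x" "l z = Some x" using wfl_D[OF wf z] by auto
      have "l' x = Some z" using x xb' z unfolding l' by auto
      then have "adj l' c x z" using adj_iff[OF c] xU zz by blast
      moreover have "(adj l' c)\<^sup>*\<^sup>* b x" using x by (simp add: cls_def)
      ultimately have "(adj l' c)\<^sup>*\<^sup>* b z" by (simp add: rtranclp.rtrancl_into_rtrancl)
      then have zS: "z \<in> ?S" by (simp add: cls_def)
      have "z \<noteq> b" using zz xb' lb by auto
      then show "the (l x) \<in> ?S - {b} \<and> the (l x) \<noteq> x \<and> the (l (the (l x))) = x"
        using zS z zz by simp
    qed
  qed
  have "card ?S = card (?S - {b}) + 1" using card_Suc_Diff1[OF finS bS] by simp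
  then show False using ev1 ev2 by simp
qed

lemma Fc_split:
  assumes "A = A1 \<union> A2" "A1 \<inter> A2 = {}" "closedA l A1" "closedA l A2" "c \<in> {1,2,3}" "A \<subseteq> U"
  shows "Fc l A c = Fc l A1 c + Fc l A2 c"
proof -
  have fin: "finite A1" "finite A2" using assms(1,6) finite_U finite_subset by blast+
  let ?I1 = "{K \<in> cls l c ` A1. K \<inter> ext_legs V l = {}}"
  let ?I2 = "{K \<in> cls l c ` A2. K \<inter> ext_legs V l = {}}"
  have "{K \<in> cls l c ` A. K \<inter> ext_legs V l = {}} = ?I1 \<union> ?I2" using assms(1) by auto
  moreover have "?I1 \<inter> ?I2 = {}"
  proof (rule ccontr)
    assume "?I1 \<inter> ?I2 \<noteq> {}"
    then obtain x1 x2 where x: "x1 \<in> A1" "x2 \<in> A2" "cls l c x1 = cls l c x2" by blast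
    have "x1 \<in> cls l c x2" using x cls_self by metis
    then have "x1 \<in> A2" using cls_sub[OF assms(4) x(2) assms(5)] by blast
    then show False using x assms(2) by blast
  qed
  ultimately show ?thesis unfolding Fc_def using fin by (simp add: card_Un_disjoint)
qed

lemma step_conn:
  assumes "u \<in> U" "c \<in> {1,2,3}" "Pt c u = w"
  shows "(Rall l)\<^sup>*\<^sup>* u w \<and> (Rall l)\<^sup>*\<^sup>* w u"
proof -
  have p: "Pt c u \<in> U" "Pt c (Pt c u) = u" using Pt_props[OF assms(1,2)] by auto
  have "Rall l u w" using adj_iff[OF assms(2)] assms p unfolding Rall_def by blast
  moreover have "Rall l w u" using adj_iff[OF assms(2)] assms p unfolding Rall_def by metis
  ultimately show ?thesis by auto
qed

lemma to_one:
  assumes "(i,k) \<in> U"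
  shows "(Rall l)\<^sup>*\<^sup>* (i,1) (i,k) \<and> (Rall l)\<^sup>*\<^sup>* (i,k) (i,1)"
proof -
  have i: "i < V" "k \<in> {1..4}" using assms by (auto simp: verts_def)
  have u1: "(i,1) \<in> U" "(i,2) \<in> U" using i by (auto simp: verts_def)
  have vb: "valid_bubble (bt i)" using valid i by simp
  have kk: "k = 1 \<or> k = 2 \<or> k = 3 \<or> k = 4" using k4 i by blast
  show ?thesis
  proof (cases "bt i")
    case Tetra
    have "Pt 1 (i,1) = (i,2)" "Pt 2 (i,1) = (i,3)" "Pt 3 (i,1) = (i,4)"
      using Tetra by (auto simp: Pt_def pc_def sw12_def sw13_def sw14_def)
    then show ?thesis using kk step_conn[OF u1(1)] by auto
  next
    case (Melo d)
    have d: "d \<in> {1,2,3}" using vb Melo by (simp add: valid_bubble_def)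
    define x where "x = (if d = 1 then 2 else 1::nat)"
    have x: "x \<in> {1,2,3}" "x \<noteq> d" unfolding x_def by auto
    have e: "Pt x (i,1) = (i,2)" "Pt d (i,1) = (i,4)" "Pt d (i,2) = (i,3)"
      using Melo x by (auto simp: Pt_def pc_def sw12_def sw13_def sw14_def)
    have s1: "(Rall l)\<^sup>*\<^sup>* (i,1) (i,2) \<and> (Rall l)\<^sup>*\<^sup>* (i,2) (i,1)" using step_conn[OF u1(1) x(1) e(1)] .
    have s2: "(Rall l)\<^sup>*\<^sup>* (i,1) (i,4) \<and> (Rall l)\<^sup>*\<^sup>* (i,4) (i,1)" using step_conn[OF u1(1) d e(2)] .
    have s3: "(Rall l)\<^sup>*\<^sup>* (i,2) (i,3) \<and> (Rall l)\<^sup>*\<^sup>* (i,3) (i,2)" using step_conn[OF u1(2) d e(3)] .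
    show ?thesis using kk s1 s2 s3 by (meson rtranclp.rtrancl_refl rtranclp_trans)
  qed
qed

lemma bubble_conn:
  assumes "u \<in> U" "v \<in> U" "fst u = fst v"
  shows "(Rall l)\<^sup>*\<^sup>* u v"
proof -
  obtain i k where u: "u = (i,k)" by (cases u)
  obtain k' where v: "v = (i,k')" using assms(3) u by (cases v) auto
  show ?thesis using to_one[of i k l] to_one[of i k' l] assms u v by (meson rtranclp_trans)
qed

end

context GG
begin

lemma main:
  assumes "wfl l" "A \<subseteq> U" "closedA l A" "\<forall>x\<in>A. \<forall>y\<in>A. (Rall l)\<^sup>*\<^sup>* x y" "\<exists>x\<in>A. l x = None"
  shows "Ftot l A + 2 * card (fst ` A) \<le> M l A + 2"
  using assms
proof (induction "M l A" arbitrary: l A rule: less_induct)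
  case less
  note wf = less.prems(1) and AU = less.prems(2) and cl = less.prems(3)
    and con = less.prems(4) and leg = less.prems(5)
  have finA: "finite A" using AU finite_U finite_subset by blast
  show ?case
  proof (cases "\<exists>y\<in>A. l y \<noteq> None")
    case False
    then have none: "\<forall>y\<in>A. l y = None" by blast
    have F0: "Fc l A c = 0" for c
    proof -
      have e: "{K \<in> cls l c ` A. K \<inter> ext_legs V l = {}} = {}"
      proof (rule ccontr)
        assume "{K \<in> cls l c ` A. K \<inter> ext_legs V l = {}} \<noteq> {}"
        then obtain x where x: "x \<in> A" "cls l c x \<inter> ext_legs V l = {}" by blast
        have "x \<in> ext_legs V l" using x AU none by (auto simp: ext_legs_def)
        then show False using x cls_self by blast
      qed
      show ?thesis unfolding Fc_def e by simp
    qed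
    obtain x0 where x0: "x0 \<in> A" using leg by blast
    have fst_eq: "fst y = fst x0" if y: "y \<in> A" for y
    proof -
      have "(Rall l)\<^sup>*\<^sup>* x0 y" using con x0 y by blast
      then have "y \<in> A \<and> fst y = fst x0"
      proof (induction rule: rtranclp_induct)
        case base show ?case using x0 by simp
      next
        case (step y z)
        then obtain c where c: "c \<in> {1,2,3}" "adj l c y z" by (auto simp: Rall_def)
        have yA: "y \<in> A" "fst y = fst x0" using step by auto
        have "l y = None" using none yA by blast
        then have zP: "z = Pt c y" "y \<in> U" using c adj_iff by auto
        have "z \<in> A" using cl step yA unfolding closedA_def by blast
        then show ?case using zP yA Pt_props[OF zP(2) c(1)] by simp
      qed
      then show ?thesis by simp
    qed
    have "fst ` A = {fst x0}" using x0 fst_eq by force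
    then show ?thesis using F0 by (simp add: Ftot_def)
  next
    case True
    then obtain y where y: "y \<in> A" "l y \<noteq> None" by blast
    obtain x0 where x0: "x0 \<in> A" "l x0 = None" using leg by blast
    have "(Rall l)\<^sup>*\<^sup>* x0 y" using con x0 y by blast
    then obtain a b where ab: "(Rall l)\<^sup>*\<^sup>* x0 a" "Rall l a b" "l a = None" "l b \<noteq> None"
      using rtranclp_transition[of "Rall l" x0 y "\<lambda>z. l z = None"] x0 y by blast
    have aA: "a \<in> A" using reach_in[OF cl x0(1) ab(1)] .
    have bA: "b \<in> A" using cl aA ab(2) unfolding closedA_def by blast
    obtain c where c: "c \<in> {1,2,3}" "adj l c a b" using ab(2) by (auto simp: Rall_def)
    have aU: "a \<in> U" and bP: "b = Pt c a" using c adj_iff ab(3) by auto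
    obtain b' where lb: "l b = Some b'" using ab(4) by blast
    have bb: "b \<in> U" "b' \<in> U" "b' \<noteq> b" "l b' = Some b" using wfl_D[OF wf lb] by auto
    have "Rall l b b'" using adj_iff[of 1 l b b'] bb lb unfolding Rall_def by auto
    then have b'A: "b' \<in> A" using cl bA unfolding closedA_def by blast
    define l' where "l' = l(b:=None, b':=None)"
    have wf': "wfl l'" unfolding l'_def using wfl_remove[OF wf lb] .
    have cl': "closedA l' A" unfolding l'_def using closed_mono[OF cl] .
    have Mset: "{x \<in> A. l' x \<noteq> None} = {x \<in> A. l x \<noteq> None} - {b, b'}"
      unfolding l'_def by auto
    have Msub: "{b, b'} \<subseteq> {x \<in> A. l x \<noteq> None}" using bA b'A lb bb by auto
    have MM: "M l A = M l' A + 2"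
    proof -
      have f: "finite {x \<in> A. l x \<noteq> None}" using finA by simp
      have "card {b,b'} = 2" using bb by simp
      then show ?thesis unfolding M_def Mset using card_Diff_subset[OF _ Msub] card_mono[OF f Msub] f
        by simp
    qed
    have "a \<in> cls l c b"
    proof -
      have "Pt c b = a" using bP Pt_props[OF aU c(1)] by simp
      then have "adj l c b a" using adj_iff[OF c(1)] aU bb by auto
      then show ?thesis by (simp add: cls_def)
    qed
    moreover have "a \<in> ext_legs V l" using aU ab(3) by (simp add: ext_legs_def)
    ultimately have extc: "cls l c b \<inter> ext_legs V l \<noteq> {}" by blast
    have rf: "Fc l A c' \<le> Fc l' A c' + (if cls l c' b \<inter> ext_legs V l = {} then 1 else 0)"
      if "c' \<in> {1,2,3}" for c'
      using remove_face[OF wf lb that AU l'_def] .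
    have Fle: "Ftot l A \<le> Ftot l' A + 2"
    proof -
      have h: "Fc l A c' \<le> Fc l' A c' + (if c' = c then 0 else 1)" if "c' \<in> {1,2,3}" for c'
        using rf[OF that] extc by (cases "c' = c") (auto split: if_splits)
      show ?thesis using h[of 1] h[of 2] h[of 3] c(1) unfolding Ftot_def by auto
    qed
    show ?thesis
    proof (cases "(Rall l')\<^sup>*\<^sup>* b b'")
      case True
      have reach: "(Rall l')\<^sup>*\<^sup>* b z" if "(Rall l)\<^sup>*\<^sup>* b z" for z
        using that
      proof (induction rule: rtranclp_induct)
        case base then show ?case by simp
      next
        case (step y z)
        show ?case
        proof (cases "Rall l' y z")
          case True then show ?thesis using step by (meson rtranclp.rtrancl_into_rtrancl)
        next
          case False
          obtain c'' where c'': "c'' \<in> {1,2,3}" "adj l c'' y z" using step(2) by (auto simp: Rall_def)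
          have "\<not> adj l' c'' y z" using False c''(1) unfolding Rall_def by blast
          then have "l y = Some z" "l' y \<noteq> Some z" using c'' adj_iff by auto
          then have "y = b \<or> y = b'" unfolding l'_def by (auto split: if_splits)
          then have "z = b' \<or> z = b" using \<open>l y = Some z\<close> lb bb by auto
          then show ?thesis using True by auto
        qed
      qed
      have con': "\<forall>x\<in>A. \<forall>y\<in>A. (Rall l')\<^sup>*\<^sup>* x y"
      proof (intro ballI)
        fix x y assume "x \<in> A" "y \<in> A"
        then have "(Rall l')\<^sup>*\<^sup>* b x" "(Rall l')\<^sup>*\<^sup>* b y" using con bA reach by blast+
        then show "(Rall l')\<^sup>*\<^sup>* x y" using Rall_rsym[OF wf'] by (meson rtranclp_trans)
      qed
      have leg': "\<exists>x\<in>A. l' x = None" using bA unfolding l'_def by auto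
      have "Ftot l' A + 2 * card (fst ` A) \<le> M l' A + 2"
        using less.hyps[of l' A] MM wf' AU cl' con' leg' by simp
      then show ?thesis using Fle MM by simp
    next
      case False
      define A1 where "A1 = {z. (Rall l')\<^sup>*\<^sup>* b z}"
      define A2 where "A2 = {z. (Rall l')\<^sup>*\<^sup>* b' z}"
      have b1: "b \<in> A1" by (simp add: A1_def)
      have b2: "b' \<in> A2" by (simp add: A2_def)
      have sub: "z \<in> A1 \<union> A2" if "(Rall l)\<^sup>*\<^sup>* b z" for z
        using that
      proof (induction rule: rtranclp_induct)
        case base then show ?case using b1 by simp
      next
        case (step y z)
        show ?case
        proof (cases "Rall l' y z")
          case True then show ?thesis using step unfolding A1_def A2_def
            by (auto intro: rtranclp.rtrancl_into_rtrancl)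
        next
          case False
          obtain c'' where c'': "c'' \<in> {1,2,3}" "adj l c'' y z" using step(2) by (auto simp: Rall_def)
          have "\<not> adj l' c'' y z" using False c''(1) unfolding Rall_def by blast
          then have "l y = Some z" "l' y \<noteq> Some z" using c'' adj_iff by auto
          then have "y = b \<or> y = b'" unfolding l'_def by (auto split: if_splits)
          then have "z = b' \<or> z = b" using \<open>l y = Some z\<close> lb bb by auto
          then show ?thesis using b1 b2 by auto
        qed
      qed
      have A1A: "A1 \<subseteq> A" unfolding A1_def using reach_in[OF cl' bA] by blast
      have A2A: "A2 \<subseteq> A" unfolding A2_def using reach_in[OF cl' b'A] by blast
      have Aeq: "A = A1 \<union> A2" using sub con bA A1A A2A by blast
      have disj: "A1 \<inter> A2 = {}"
      proof (rule ccontr)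
        assume "A1 \<inter> A2 \<noteq> {}"
        then obtain z where "(Rall l')\<^sup>*\<^sup>* b z" "(Rall l')\<^sup>*\<^sup>* b' z" unfolding A1_def A2_def by blast
        then have "(Rall l')\<^sup>*\<^sup>* b b'" using Rall_rsym[OF wf'] by (meson rtranclp_trans)
        then show False using False by simp
      qed
      have cl1: "closedA l' A1" unfolding closedA_def A1_def by (auto intro: rtranclp.rtrancl_into_rtrancl)
      have cl2: "closedA l' A2" unfolding closedA_def A2_def by (auto intro: rtranclp.rtrancl_into_rtrancl)
      have con1: "\<forall>x\<in>A1. \<forall>y\<in>A1. (Rall l')\<^sup>*\<^sup>* x y"
        unfolding A1_def using Rall_rsym[OF wf'] by (meson mem_Collect_eq rtranclp_trans)
      have con2: "\<forall>x\<in>A2. \<forall>y\<in>A2. (Rall l')\<^sup>*\<^sup>* x y"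
        unfolding A2_def using Rall_rsym[OF wf'] by (meson mem_Collect_eq rtranclp_trans)
      have leg1: "\<exists>x\<in>A1. l' x = None" using b1 unfolding l'_def by auto
      have leg2: "\<exists>x\<in>A2. l' x = None" using b2 unfolding l'_def by auto
      have fin1: "finite A1" "finite A2" using A1A A2A finA finite_subset by blast+
      have Msplit: "M l' A = M l' A1 + M l' A2"
      proof -
        have "{x \<in> A. l' x \<noteq> None} = {x \<in> A1. l' x \<noteq> None} \<union> {x \<in> A2. l' x \<noteq> None}"
          using Aeq by auto
        then show ?thesis unfolding M_def using fin1 disj by (simp add: card_Un_disjoint disjoint_iff)
      qed
      have IH1: "Ftot l' A1 + 2 * card (fst ` A1) \<le> M l' A1 + 2"
        using less.hyps[of l' A1] MM Msplit wf' A1A AU cl1 con1 leg1 by simp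
      have IH2: "Ftot l' A2 + 2 * card (fst ` A2) \<le> M l' A2 + 2"
        using less.hyps[of l' A2] MM Msplit wf' A2A AU cl2 con2 leg2 by simp
      have Fb: "Fc l A c' \<le> Fc l' A c'" if "c' \<in> {1,2,3}" for c'
        using rf[OF that] bridge[OF wf lb that l'_def False] by simp
      have Fs: "Fc l' A c' = Fc l' A1 c' + Fc l' A2 c'" if "c' \<in> {1,2,3}" for c'
        using Fc_split[OF Aeq disj cl1 cl2 that AU] .
      have "Ftot l A \<le> Ftot l' A1 + Ftot l' A2"
        using Fb[of 1] Fb[of 2] Fb[of 3] Fs[of 1] Fs[of 2] Fs[of 3] unfolding Ftot_def by simp
      moreover have "card (fst ` A) = card (fst ` A1) + card (fst ` A2)"
      proof -
        have "fst ` A1 \<inter> fst ` A2 = {}"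
        proof (rule ccontr)
          assume "fst ` A1 \<inter> fst ` A2 \<noteq> {}"
          then obtain x1 x2 where x: "x1 \<in> A1" "x2 \<in> A2" "fst x1 = fst x2" by auto
          have "x1 \<in> U" "x2 \<in> U" using x A1A A2A AU by auto
          then have "(Rall l')\<^sup>*\<^sup>* x1 x2" using bubble_conn x(3) by blast
          then have "x2 \<in> A1" using reach_in[OF cl1 x(1)] by blast
          then show False using x(2) disj by blast
        qed
        then show ?thesis using Aeq fin1 by (simp add: image_Un card_Un_disjoint)
      qed
      ultimately show ?thesis using IH1 IH2 MM Msplit by simp
    qed
  qed
qed

end

theorem lemma1:
  fixes V :: nat and bt :: "nat \<Rightarrow> bubble" and lns :: "nat \<times> nat \<Rightarrow> (nat \<times> nat) option"
  assumes "wf_graph V bt lns"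
    and "connected_graph V bt lns"
    and "N_ext V lns \<ge> 6"
  shows "omega_deg V bt lns \<le> - real (N_ext V lns) / 12"
proof -
  have valid: "\<And>i. i < V \<Longrightarrow> valid_bubble (bt i)" using assms(1) unfolding wf_graph_def by blast
  interpret GG V bt using valid by unfold_locales
  have wf: "wfl lns" using assms(1) unfolding wf_graph_def wfl_def by blast
  have legne: "ext_legs V lns \<noteq> {}" using assms(3) unfolding N_ext_def by auto
  then obtain x0 where x0: "x0 \<in> U" "lns x0 = None" unfolding ext_legs_def by blast
  have RR: "Rall lns = (\<lambda>x y. \<exists>c\<in>{1,2,3}. face_adj V bt lns c x y)"
    by (intro ext) (simp add: Rall_def)
  have con: "\<forall>x\<in>U. \<forall>y\<in>U. (Rall lns)\<^sup>*\<^sup>* x y"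
    using assms(2) unfolding connected_graph_def RR by simp
  have mainr: "Ftot lns U + 2 * card (fst ` U) \<le> M lns U + 2"
    using main[OF wf subset_refl closedU con] x0 by blast
  have fc: "faces V bt lns c = cls lns c ` U" if c: "c \<in> {1,2,3}" for c
  proof -
    let ?R = "{(u,v). u \<in> U \<and> v \<in> U \<and> (face_adj V bt lns c)\<^sup>*\<^sup>* u v}"
    have h: "?R `` {x} = cls lns c x" if "x \<in> U" for x
      using cls_sub[OF closedU that c] that by (auto simp: cls_def)
    have "faces V bt lns c = (\<Union>x\<in>U. {?R `` {x}})" unfolding faces_def quotient_def by simp
    also have "\<dots> = (\<Union>x\<in>U. {cls lns c x})" using h by auto
    also have "\<dots> = cls lns c ` U" by blast
    finally show ?thesis .
  qed
  have Fint: "F_int V bt lns = Ftot lns U"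
    unfolding F_int_def Ftot_def Fc_def using fc[of 1] fc[of 2] fc[of 3] by simp
  have Ueq: "U = {0..<V} \<times> {1..4}" by (auto simp: verts_def)
  have VV: "V > 0" using x0 by (auto simp: verts_def)
  have "fst ` U = {0..<V}"
  proof
    show "fst ` U \<subseteq> {0..<V}" by (auto simp: verts_def)
    show "{0..<V} \<subseteq> fst ` U"
    proof
      fix i assume "i \<in> {0..<V}"
      then have "(i,1) \<in> U" by (simp add: verts_def)
      then show "i \<in> fst ` U" by (metis fst_conv image_eqI)
    qed
  qed
  then have cf: "card (fst ` U) = V" by simp
  have cU: "card U = 4 * V" unfolding Ueq by (simp add: card_cartesian_product)
  have NM: "N_ext V lns + M lns U = 4 * V"
  proof -
    have "U = ext_legs V lns \<union> {x \<in> U. lns x \<noteq> None}" unfolding ext_legs_def by blast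
    moreover have "ext_legs V lns \<inter> {x \<in> U. lns x \<noteq> None} = {}" by (auto simp: ext_legs_def)
    ultimately have "card U = card (ext_legs V lns) + card {x \<in> U. lns x \<noteq> None}"
      using finite_U by (metis card_Un_disjoint finite_Un)
    then show ?thesis using cU unfolding N_ext_def M_def by simp
  qed
  have r1: "real (Ftot lns U) + 2 * real V \<le> real (M lns U) + 2" using mainr cf
    by (metis of_nat_add of_nat_le_iff of_nat_mult of_nat_numeral)
  have r2: "real (N_ext V lns) + real (M lns U) = 4 * real V" using NM
    by (metis of_nat_add of_nat_mult of_nat_numeral)
  have r3: "real (N_ext V lns) \<ge> 6" using assms(3) by simp
  show ?thesis unfolding omega_deg_def Fint using r1 r2 r3 by linarith
qed

end
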